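(* Let ${\bm p}^t\in(0,1)^V$ be a softmax probability vector, $y\in[V]$ a ground-truth class with one-hot ${\bm y}={\bm e}_y$, $y^*=\arg\max_{j\neq y}p_j^t$, ${\bm g}^t={\bm p}^t-{\bm y}$, and ${\bm H}^t_{{\bm z}}=\mathrm{diag}({\bm p}^t)-{\bm p}^t({\bm p}^t)^\top$. Let $S=p^t_y+p^t_{y^*}$, $\tau=1-S$, $\bar p_y=p^t_y/S\in(0,1)$, and $\Delta_{\mathrm{bin}}(\bar p_y)=4\bar p_y(1-\bar p_y)^2$. Then $$\Delta^t_{y^*,y}:=({\bm H}^t_{{\bm z}}{\bm g}^t)_{y^*}-({\bm H}^t_{{\bm z}}{\bm g}^t)_y=\Delta_{\mathrm{bin}}(\bar p_y)+\zeta^t\quad\text{with}\quad |\zeta^t|\le 6\tau.$$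
   Context: ${\bm H}^t_{{\bm z}}$ and ${\bm g}^t$ are the Hessian and gradient in the logits of the softmax cross-entropy loss $-\sum_k y_k\log p_k$ at ${\bm p}^t$. *)

theory Defs
  imports Complex_Main
begin

text \<open>Vectors in R^V are functions nat => real on indices {0..<V}; classes are 0..V-1.\<close>

definition onehot :: "nat \<Rightarrow> nat \<Rightarrow> real" where
  "onehot y = (\<lambda>j. if j = y then 1 else 0)"

definition ce_grad :: "(nat \<Rightarrow> real) \<Rightarrow> nat \<Rightarrow> nat \<Rightarrow> real" where
  "ce_grad p y = (\<lambda>j. p j - onehot y j)"

definition ce_hess :: "(nat \<Rightarrow> real) \<Rightarrow> nat \<Rightarrow> nat \<Rightarrow> real" where
  "ce_hess p = (\<lambda>i j. (if i = j then p i else 0) - p i * p j)"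

definition mat_vec :: "nat \<Rightarrow> (nat \<Rightarrow> nat \<Rightarrow> real) \<Rightarrow> (nat \<Rightarrow> real) \<Rightarrow> nat \<Rightarrow> real" where
  "mat_vec V A v = (\<lambda>i. \<Sum>j<V. A i j * v j)"

definition Delta_bin :: "real \<Rightarrow> real" where
  "Delta_bin q = 4 * q * (1 - q)^2"

end

theory Submission
  imports Defs
begin

lemma h_bound:
  fixes q S :: real
  assumes q0: "0 \<le> q" and q1: "q \<le> 1" and S0: "0 \<le> S" and S1: "S \<le> 1"
  shows "\<bar>4*q*(1-q)^2 + S*(q*(2*q-1)*(2*q-3)) + S^2*((2*q-1)*(2*q^2-2*q+1))\<bar> \<le> 5"
proof -
  have e1: "4*q*(1-q) = 1 - (2*q-1)^2" by (simp add: power2_eq_square algebra_simps)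
  have f1: "0 \<le> 4*q*(1-q)" "4*q*(1-q) \<le> 1"
    using q0 q1 apply simp
    using e1 zero_le_power2[of "2*q-1"] by linarith
  have "4*q*(1-q)*(1-q) \<le> 1*1" by (rule mult_mono) (use f1 q0 q1 in auto)
  moreover have "0 \<le> 4*q*(1-q)*(1-q)" using f1 q1 by simp
  moreover have "4*q*(1-q)^2 = 4*q*(1-q)*(1-q)" by (simp add: power2_eq_square)
  ultimately have A: "\<bar>4*q*(1-q)^2\<bar> \<le> 1" by (metis abs_of_nonneg mult_1 mult.assoc)
  have g1: "\<bar>2*q-1\<bar> \<le> 1" using q0 q1 by auto
  have g2: "\<bar>2*q-3\<bar> \<le> 3" using q0 q1 by auto
  have g0: "\<bar>q\<bar> \<le> 1" using q0 q1 by auto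
  have "\<bar>q\<bar>*\<bar>2*q-1\<bar> \<le> 1*1" by (rule mult_mono) (use g0 g1 in auto)
  hence "\<bar>q\<bar>*\<bar>2*q-1\<bar>*\<bar>2*q-3\<bar> \<le> 1*3" by (intro mult_mono) (use g2 in auto)
  hence B0: "\<bar>q*(2*q-1)*(2*q-3)\<bar> \<le> 3" by (simp add: abs_mult)
  have k: "0 \<le> 2*q^2-2*q+1" "2*q^2-2*q+1 \<le> 1"
  proof -
    have "2*q^2-2*q+1 = q^2 + (1-q)^2" by (simp add: power2_eq_square algebra_simps)
    thus "0 \<le> 2*q^2-2*q+1" by (metis add_nonneg_nonneg zero_le_power2)
    have "q*q \<le> q*1" using q0 q1 by (intro mult_left_mono) auto
    thus "2*q^2-2*q+1 \<le> 1" by (simp add: power2_eq_square)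
  qed
  have "\<bar>2*q-1\<bar>*\<bar>2*q^2-2*q+1\<bar> \<le> 1*1" by (rule mult_mono) (use g1 k in auto)
  hence C0: "\<bar>(2*q-1)*(2*q^2-2*q+1)\<bar> \<le> 1" by (simp add: abs_mult)
  have "\<bar>S*(q*(2*q-1)*(2*q-3))\<bar> \<le> 1*3" unfolding abs_mult
    by (rule mult_mono) (use S0 S1 B0 in auto)
  moreover have "\<bar>S^2*((2*q-1)*(2*q^2-2*q+1))\<bar> \<le> 1*1" unfolding abs_mult
    by (rule mult_mono) (use S0 S1 C0 in \<open>auto simp: power_le_one\<close>)
  ultimately show ?thesis using A by linarith
qed


lemma poly_id:
  fixes q S R :: real
  shows "((1-q)*S)^2 + (q*S)*((1-q)*S) - 2*(q*S)^2 + q*S + (q*S - (1-q)*S)*((q*S)^2 + ((1-q)*S)^2 + R)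
     - 4*q*(1-q)^2
   = (q*S - (1-q)*S)*R - (1-S)*(4*q*(1-q)^2 + S*(q*(2*q-1)*(2*q-3)) + S^2*((2*q-1)*(2*q^2-2*q+1)))"
  by algebra

theorem lemma3:
  fixes V :: nat and p :: "nat \<Rightarrow> real" and y ystar :: nat
  assumes p_range: "\<forall>j<V. 0 < p j \<and> p j < 1"
    and p_sum: "(\<Sum>j<V. p j) = 1"
    and y_lt: "y < V"
    and ystar_lt: "ystar < V" and ystar_ne: "ystar \<noteq> y"
    and ystar_max: "\<forall>j<V. j \<noteq> y \<longrightarrow> p j \<le> p ystar"
  shows "\<exists>\<zeta>::real.
     mat_vec V (ce_hess p) (ce_grad p y) ystar - mat_vec V (ce_hess p) (ce_grad p y) y
       = Delta_bin (p y / (p y + p ystar)) + \<zeta>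
     \<and> \<bar>\<zeta>\<bar> \<le> 6 * (1 - (p y + p ystar))"
proof -
  define g where "g = ce_grad p y"
  define a where "a = p y"
  define b where "b = p ystar"
  define Oth where "Oth = {..<V} - {y, ystar}"
  define R where "R = (\<Sum>j\<in>Oth. p j ^ 2)"
  define t where "t = (\<Sum>j\<in>Oth. p j)"
  have mv: "mat_vec V (ce_hess p) g i = p i * g i - p i * (\<Sum>j<V. p j * g j)" if "i < V" for i
  proof -
    have "mat_vec V (ce_hess p) g i = (\<Sum>j<V. (if i = j then p i * g j else 0) - p i * (p j * g j))"
      unfolding mat_vec_def ce_hess_def by (intro sum.cong) (auto simp: algebra_simps)
    also have "\<dots> = p i * g i - p i * (\<Sum>j<V. p j * g j)"
      using that by (simp add: sum_subtractf sum_distrib_left)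
    finally show ?thesis .
  qed
  have split: "(\<Sum>j<V. f j) = f y + f ystar + (\<Sum>j\<in>Oth. f j)" for f :: "nat \<Rightarrow> real"
  proof -
    have "(\<Sum>j<V. f j) = f y + (\<Sum>j\<in>{..<V} - {y}. f j)"
      using y_lt by (simp add: sum.remove)
    also have "(\<Sum>j\<in>{..<V} - {y}. f j) = f ystar + (\<Sum>j\<in>{..<V} - {y} - {ystar}. f j)"
      using ystar_lt ystar_ne by (intro sum.remove) auto
    finally show ?thesis unfolding Oth_def by (simp add: Diff_insert2 [symmetric] insert_commute)
  qed
  have pg: "(\<Sum>j<V. p j * g j) = a^2 + b^2 + R - a"
  proof -
    have "(\<Sum>j<V. p j * g j) = (\<Sum>j<V. p j ^ 2) - (\<Sum>j<V. if j = y then p j else 0)"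
      unfolding sum_subtractf[symmetric] g_def ce_grad_def onehot_def
      by (intro sum.cong) (auto simp: power2_eq_square algebra_simps)
    also have "\<dots> = (\<Sum>j<V. p j ^ 2) - a" using y_lt by (simp add: a_def)
    finally show ?thesis using split[of "\<lambda>j. p j ^ 2"] by (simp add: a_def b_def R_def)
  qed
  have tdef: "t = 1 - a - b" using split[of p] p_sum by (simp add: a_def b_def t_def)
  have Osub: "Oth \<subseteq> {..<V}" "y \<notin> Oth" unfolding Oth_def by auto
  have R0: "0 \<le> R" unfolding R_def by (simp add: sum_nonneg)
  have Rle: "R \<le> b * t" unfolding R_def t_def sum_distrib_left
  proof (rule sum_mono)
    fix j assume j: "j \<in> Oth"
    hence "0 < p j" "p j \<le> b" using Osub p_range ystar_max by (auto simp: b_def)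
    thus "p j ^ 2 \<le> b * p j" by (simp add: power2_eq_square mult_right_mono)
  qed
  have a0: "0 < a" "a < 1" using p_range y_lt by (auto simp: a_def)
  have b0: "0 < b" "b < 1" using p_range ystar_lt by (auto simp: b_def)
  have t0: "0 \<le> t" unfolding t_def using Osub p_range by (intro sum_nonneg) auto
  have Delta: "mat_vec V (ce_hess p) g ystar - mat_vec V (ce_hess p) g y
     = b^2 + a*b - 2*a^2 + a + (a - b)*(a^2 + b^2 + R)"
  proof -
    have gy: "g y = a - 1" "g ystar = b" using ystar_ne
      by (auto simp: g_def ce_grad_def onehot_def a_def b_def)
    show ?thesis unfolding mv[OF y_lt] mv[OF ystar_lt] pg gy
      by (simp add: a_def b_def power2_eq_square algebra_simps)
  qed
  define S where "S = a + b"
  define q where "q = a / S"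
  have S0: "0 < S" "S \<le> 1" using a0 b0 t0 tdef by (auto simp: S_def)
  have aq: "a = q * S" using S0 by (simp add: q_def)
  have bq: "b = (1 - q) * S" using S0 by (simp add: q_def S_def field_simps)
  have q01: "0 \<le> q" "q \<le> 1" using a0 b0 S0 by (auto simp: q_def S_def divide_simps)
  define h where "h = 4*q*(1-q)^2 + S*(q*(2*q-1)*(2*q-3)) + S^2*((2*q-1)*(2*q^2-2*q+1))"
  have hb: "\<bar>h\<bar> \<le> 5" unfolding h_def using h_bound q01 S0 by auto
  have zeta: "b^2 + a*b - 2*a^2 + a + (a - b)*(a^2 + b^2 + R) - Delta_bin q = (a - b) * R - t * h"
  proof -
    have tS: "t = 1 - S" using tdef S_def by simp
    show ?thesis using poly_id[of q S R, folded aq bq] unfolding Delta_bin_def h_def tS by simp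
  qed
  have "\<bar>(a - b) * R\<bar> \<le> 1 * t"
  proof -
    have "\<bar>(a - b) * R\<bar> \<le> 1 * R" unfolding abs_mult using a0 b0 R0 by (intro mult_mono) auto
    also have "\<dots> \<le> b * t" using Rle by simp
    also have "\<dots> \<le> 1 * t" using b0 t0 by (intro mult_right_mono) auto
    finally show ?thesis .
  qed
  moreover have "\<bar>t * h\<bar> \<le> t * 5" unfolding abs_mult using t0 hb by (simp add: mult_left_mono)
  ultimately have "\<bar>(a - b) * R - t * h\<bar> \<le> 6 * t" by linarith
  moreover have "mat_vec V (ce_hess p) g ystar - mat_vec V (ce_hess p) g y
      = Delta_bin q + ((a - b) * R - t * h)" using Delta zeta by simp
  ultimately show ?thesis
    unfolding g_def q_def S_def a_def b_def tdef[unfolded a_def b_def] by (intro exI) auto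

qed

end
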